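(* Let $A\in\mathbb{R}^{n\times n}$ be such that $A-I$ is an irreducible singular $M$-matrix, let $v>0$ satisfy $(A^T-I)v=0$, and let $b\in\mathbb{R}^n$ satisfy $v^Tb=0$. Then the equation $Ax-|x|=b$ has infinitely many solutions.
   Context: $|x|$ is the componentwise absolute value. A $Z$-matrix is a real square matrix whose off-diagonal entries are all nonpositive; any $Z$-matrix can be written $sI-B$ with $B\ge 0$ entrywise, and it is a singular $M$-matrix if $s=\rho(B)$, where $\rho$ is spectral radius. A square matrix $M$ is reducible if there is a permutation matrix $P$ with $P^TMP=\begin{bmatrix}M_{11}&M_{12}\\0&M_{22}\end{bmatrix}$ where $M_{11},M_{22}$ are square (nonempty) blocks; it is irreducible otherwise. $v>0$ means all components of $v$ are positive. *)

theory Defs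
  imports "Jordan_Normal_Form.Spectral_Radius"
begin

definition Z_matrix :: "nat \<Rightarrow> real mat \<Rightarrow> bool" where
  "Z_matrix n M \<longleftrightarrow> M \<in> carrier_mat n n \<and>
     (\<forall>i<n. \<forall>j<n. i \<noteq> j \<longrightarrow> M $$ (i,j) \<le> 0)"

definition singular_M_matrix :: "nat \<Rightarrow> real mat \<Rightarrow> bool" where
  "singular_M_matrix n M \<longleftrightarrow> Z_matrix n M \<and>
     (\<exists>s B. B \<in> carrier_mat n n \<and> (\<forall>i<n. \<forall>j<n. 0 \<le> B $$ (i,j)) \<and>
        M = s \<cdot>\<^sub>m 1\<^sub>m n - B \<and> s = spectral_radius (map_mat complex_of_real B))"

definition perm_matrix :: "nat \<Rightarrow> real mat \<Rightarrow> bool" where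
  "perm_matrix n P \<longleftrightarrow> (\<exists>p. p permutes {..<n} \<and>
     P = mat n n (\<lambda>(i,j). if p i = j then 1 else 0))"

definition reducible_matrix :: "nat \<Rightarrow> real mat \<Rightarrow> bool" where
  "reducible_matrix n M \<longleftrightarrow> (\<exists>P k. perm_matrix n P \<and> 0 < k \<and> k < n \<and>
     (\<forall>i j. k \<le> i \<longrightarrow> i < n \<longrightarrow> j < k \<longrightarrow> (transpose_mat P * M * P) $$ (i,j) = 0))"

definition irreducible_matrix :: "nat \<Rightarrow> real mat \<Rightarrow> bool" where
  "irreducible_matrix n M \<longleftrightarrow> \<not> reducible_matrix n M"

end

theory Submission
  imports Defs
begin

lemma reducible_of_set:
  fixes Mx :: "real mat"
  assumes Mc: "Mx \<in> carrier_mat n n" and Zs: "Z \<subseteq> {..<n}" and Zne: "Z \<noteq> {}" and Zp: "Z \<noteq> {..<n}"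
    and zero: "\<forall>i\<in>Z. \<forall>j<n. j \<notin> Z \<longrightarrow> Mx $$ (i,j) = 0"
  shows "reducible_matrix n Mx"
proof -
  define N where "N = {..<n} - Z"
  define k where "k = card N"
  have fN: "finite N" "finite Z" using Zs finite_subset by (auto simp: N_def)
  have NZ: "N \<union> Z = {..<n}" "N \<inter> Z = {}" using Zs by (auto simp: N_def)
  have cardsum: "k + card Z = n" unfolding k_def
    using card_Un_disjoint[OF fN NZ(2)] NZ(1) by simp
  have k0: "0 < k" unfolding k_def using fN Zs Zp by (auto simp: N_def card_gt_0_iff)
  have kn: "k < n" using cardsum Zne fN by (auto simp: card_gt_0_iff)
  obtain g where g: "bij_betw g {0..<k} N" using ex_bij_betw_nat_finite[OF fN(1)] k_def by auto
  obtain h where h: "bij_betw h {0..<card Z} Z" using ex_bij_betw_nat_finite[OF fN(2)] by auto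
  define f where "f i = (if i < k then g i else if i < n then h (i - k) else i)" for i
  have sh: "bij_betw (\<lambda>i. i - k) {k..<n} {0..<card Z}"
    by (rule bij_betw_byWitness[where f' = "\<lambda>i. i + k"]) (use cardsum in auto)
  have b1: "bij_betw f {0..<k} N" using g by (rule bij_betw_cong[THEN iffD1, rotated]) (auto simp: f_def)
  have b2: "bij_betw f {k..<n} Z"
  proof -
    have "bij_betw (h \<circ> (\<lambda>i. i - k)) {k..<n} Z" using bij_betw_trans[OF sh h] .
    then show ?thesis by (rule bij_betw_cong[THEN iffD1, rotated]) (auto simp: f_def)
  qed
  have "bij_betw f ({0..<k} \<union> {k..<n}) (N \<union> Z)" by (rule bij_betw_combine[OF b1 b2 NZ(2)])
  moreover have "{0..<k} \<union> {k..<n} = {..<n}" using kn by auto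
  ultimately have bf: "bij_betw f {..<n} {..<n}" using NZ(1) by simp
  have fp: "f permutes {..<n}" by (rule bij_imp_permutes[OF bf]) (use kn in \<open>auto simp: f_def\<close>)
  define p where "p = inv_into UNIV f"
  have pp: "p permutes {..<n}" unfolding p_def using permutes_inv[OF fp] .
  have peq: "p a = i \<longleftrightarrow> f i = a" for a i unfolding p_def using permutes_inv_eq[OF fp] by metis
  define P where "P = mat n n (\<lambda>(i,j). if p i = j then 1 else (0::real))"
  have PP: "perm_matrix n P" unfolding perm_matrix_def P_def using pp by blast
  have fn: "f i < n" if "i < n" for i using fp that by (meson permutes_in_image lessThan_iff)
    have ite: "(if c then 1 else 0) * (x::real) = (if c then x else 0)" "x * (if c then 1 else 0) = (if c then x else 0)" for c x by simp_all
  have ent: "(transpose_mat P * Mx * P) $$ (i,j) = Mx $$ (f i, f j)" if "i < n" "j < n" for i j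
  proof -
    have "(transpose_mat P * Mx * P) $$ (i,j) = (\<Sum>b<n. (\<Sum>a<n. (if f i = a then 1 else 0) * Mx $$ (a,b)) * (if f j = b then 1 else 0))"
      using that Mc by (simp add: P_def scalar_prod_def peq lessThan_atLeast0)
    also have "\<dots> = Mx $$ (f i, f j)" using fn that by (simp add: ite sum.delta)
    finally show ?thesis .
  qed
  show ?thesis unfolding reducible_matrix_def
  proof (intro exI conjI allI impI)
    show "perm_matrix n P" by fact
    show "0 < k" "k < n" by fact+
    fix i j assume ij: "k \<le> i" "i < n" "j < k"
    have "f i \<in> Z" using b2 ij by (auto simp: bij_betw_def)
    moreover have "f j \<in> N" using b1 ij by (auto simp: bij_betw_def)
    ultimately show "(transpose_mat P * Mx * P) $$ (i, j) = 0" using ent ij zero fn kn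
      by (auto simp: N_def)
  qed
qed

lemma mv_sum: "M \<in> carrier_mat n n \<Longrightarrow> x \<in> carrier_vec n \<Longrightarrow> i < n \<Longrightarrow>
  (M *\<^sub>v x) $ i = (\<Sum>j<n. M $$ (i,j) * x $ j)"
  by (simp add: scalar_prod_def lessThan_atLeast0 row_def)

theorem proposition4p3:
  fixes A :: "real mat" and v b :: "real vec" and n :: nat
  assumes n: "0 < n"
    and A: "A \<in> carrier_mat n n"
    and M: "singular_M_matrix n (A - 1\<^sub>m n)"
    and irr: "irreducible_matrix n (A - 1\<^sub>m n)"
    and v: "v \<in> carrier_vec n" and vpos: "\<forall>i<n. 0 < v $ i"
    and vker: "(transpose_mat A - 1\<^sub>m n) *\<^sub>v v = 0\<^sub>v n"
    and b: "b \<in> carrier_vec n" and vb: "v \<bullet> b = 0"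
  shows "infinite {x \<in> carrier_vec n. A *\<^sub>v x - map_vec abs x = b}"
proof -
  define Mx where "Mx = A - 1\<^sub>m n"
  have Mc: "Mx \<in> carrier_mat n n" unfolding Mx_def by (rule minus_carrier_mat) simp
  have Z: "\<And>i j. i < n \<Longrightarrow> j < n \<Longrightarrow> i \<noteq> j \<Longrightarrow> Mx $$ (i,j) \<le> 0"
    using M unfolding singular_M_matrix_def Z_matrix_def Mx_def by blast
  have nred: "\<not> reducible_matrix n Mx" using irr unfolding irreducible_matrix_def Mx_def .
  have colsum: "(\<Sum>i<n. Mx $$ (i,j) * v $ i) = 0" if j: "j < n" for j
  proof -
    have "((transpose_mat A - 1\<^sub>m n) *\<^sub>v v) $ j = 0" using vker j by simp
    moreover have "((transpose_mat A - 1\<^sub>m n) *\<^sub>v v) $ j = (\<Sum>i<n. (transpose_mat A - 1\<^sub>m n) $$ (j,i) * v $ i)"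
      using A v j by (intro mv_sum) auto
    moreover have "(\<Sum>i<n. (transpose_mat A - 1\<^sub>m n) $$ (j,i) * v $ i) = (\<Sum>i<n. Mx $$ (i,j) * v $ i)"
      using A j by (intro sum.cong) (auto simp: Mx_def)
    ultimately show ?thesis by simp
  qed
  have mv: "(Mx *\<^sub>v x) $ i = (\<Sum>j<n. Mx $$ (i,j) * x $ j)" if "x \<in> carrier_vec n" "i < n" for x i
    using mv_sum[OF Mc that] .
  have key: "(\<Sum>i<n. v $ i * (Mx *\<^sub>v x) $ i) = 0" if x: "x \<in> carrier_vec n" for x
  proof -
    have "(\<Sum>i<n. v $ i * (Mx *\<^sub>v x) $ i) = (\<Sum>i<n. \<Sum>j<n. v $ i * Mx $$ (i,j) * x $ j)"
      using x by (simp add: mv sum_distrib_left mult.assoc)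
    also have "\<dots> = (\<Sum>j<n. \<Sum>i<n. v $ i * Mx $$ (i,j) * x $ j)" by (rule sum.swap)
    also have "\<dots> = (\<Sum>j<n. x $ j * (\<Sum>i<n. Mx $$ (i,j) * v $ i))"
      by (simp add: sum_distrib_left mult_ac)
    also have "\<dots> = 0" using colsum by simp
    finally show ?thesis .
  qed
  have diag: "0 \<le> Mx $$ (j,j)" if j: "j < n" for j
  proof -
    have "0 = (\<Sum>i<n. Mx $$ (i,j) * v $ i)" using colsum j by simp
    also have "\<dots> = Mx $$ (j,j) * v $ j + (\<Sum>i\<in>{..<n}-{j}. Mx $$ (i,j) * v $ i)"
      using j by (subst sum.remove[of _ j]) auto
    finally have e: "Mx $$ (j,j) * v $ j = - (\<Sum>i\<in>{..<n}-{j}. Mx $$ (i,j) * v $ i)" by linarith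
    have "(\<Sum>i\<in>{..<n}-{j}. Mx $$ (i,j) * v $ i) \<le> 0"
      using Z vpos j by (intro sum_nonpos) (simp add: mult_nonpos_nonneg less_imp_le)
    then have "0 \<le> Mx $$ (j,j) * v $ j" using e by linarith
    then show ?thesis using vpos j by (metis zero_le_mult_iff linorder_not_le)
  qed
  have lemP: "(Mx *\<^sub>v x) $ i = 0" if x: "x \<in> carrier_vec n" and le: "\<forall>i<n. (Mx *\<^sub>v x) $ i \<le> 0" and i: "i < n" for x i
  proof -
    have "(\<Sum>i<n. - (v $ i * (Mx *\<^sub>v x) $ i)) = 0" using key[OF x] by (simp add: sum_negf)
    moreover have "\<forall>i\<in>{..<n}. 0 \<le> - (v $ i * (Mx *\<^sub>v x) $ i)"
      using le vpos by (auto simp: mult_nonneg_nonpos less_imp_le)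
    ultimately have "\<forall>i\<in>{..<n}. - (v $ i * (Mx *\<^sub>v x) $ i) = 0" using sum_nonneg_eq_0_iff[of "{..<n}" "\<lambda>i. - (v $ i * (Mx *\<^sub>v x) $ i)"] by blast
    then show ?thesis using i vpos by force
  qed
  have lemQ: "\<forall>i<n. 0 < w $ i" if w: "w \<in> carrier_vec n" and wn: "\<forall>i<n. 0 \<le> w $ i"
    and Mw: "\<forall>i<n. (Mx *\<^sub>v w) $ i = 0" and nz: "\<exists>i<n. w $ i \<noteq> 0" for w
  proof (rule ccontr)
    assume "\<not> (\<forall>i<n. 0 < w $ i)"
    then obtain i0 where i0: "i0 < n" "w $ i0 = 0" using wn by (metis less_eq_real_def)
    define ZS where "ZS = {i. i < n \<and> w $ i = 0}"
    have "reducible_matrix n Mx"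
    proof (rule reducible_of_set[OF Mc, of ZS])
      show "ZS \<subseteq> {..<n}" "ZS \<noteq> {}" using i0 by (auto simp: ZS_def)
      show "ZS \<noteq> {..<n}" using nz by (auto simp: ZS_def)
      show "\<forall>i\<in>ZS. \<forall>j<n. j \<notin> ZS \<longrightarrow> Mx $$ (i, j) = 0"
      proof (intro ballI allI impI)
        fix i j assume i: "i \<in> ZS" and j: "j < n" "j \<notin> ZS"
        have in_: "i < n" "w $ i = 0" using i by (auto simp: ZS_def)
        have wj: "0 < w $ j" using j wn by (auto simp: ZS_def less_eq_real_def)
        have "0 = (\<Sum>k<n. Mx $$ (i,k) * w $ k)" using Mw mv[OF w in_(1)] in_ by simp
        also have "\<dots> = (\<Sum>k\<in>{..<n}-{i}. Mx $$ (i,k) * w $ k)"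
          using in_ by (subst sum.remove[of _ i]) auto
        finally have s0: "(\<Sum>k\<in>{..<n}-{i}. - (Mx $$ (i,k) * w $ k)) = 0" by (simp add: sum_negf)
        have "\<forall>k\<in>{..<n}-{i}. 0 \<le> - (Mx $$ (i,k) * w $ k)"
          using Z wn in_ by (auto simp: mult_nonpos_nonneg)
        then have "\<forall>k\<in>{..<n}-{i}. - (Mx $$ (i,k) * w $ k) = 0" using s0 sum_nonneg_eq_0_iff[of "{..<n}-{i}" "\<lambda>k. - (Mx $$ (i,k) * w $ k)"] by blast
        moreover have "j \<in> {..<n}-{i}" using j i by (auto simp: ZS_def)
        ultimately show "Mx $$ (i,j) = 0" using wj by force
      qed
    qed
    then show False using nred by simp
  qed
  have lemAbs: "(Mx *\<^sub>v map_vec abs y) $ i \<le> 0" if y: "y \<in> carrier_vec n" and i: "i < n"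
    and h: "(Mx *\<^sub>v y) $ i = 0 \<or> y $ i = 0" for y i
  proof -
    have ay: "map_vec abs y \<in> carrier_vec n" using y by simp
    have ssplit: "(\<Sum>j<n. Mx $$ (i,j) * g j) = Mx $$ (i,i) * g i + (\<Sum>j\<in>{..<n}-{i}. Mx $$ (i,j) * g j)" for g
      using i by (subst sum.remove[of _ i]) auto
    have eA: "(Mx *\<^sub>v map_vec abs y) $ i = Mx $$ (i,i) * \<bar>y $ i\<bar> + (\<Sum>j\<in>{..<n}-{i}. Mx $$ (i,j) * \<bar>y $ j\<bar>)"
      using mv[OF ay i] ssplit[of "\<lambda>j. \<bar>y $ j\<bar>"] y by simp
    have offabs: "(\<Sum>j\<in>{..<n}-{i}. Mx $$ (i,j) * \<bar>y $ j\<bar>) = - (\<Sum>j\<in>{..<n}-{i}. \<bar>Mx $$ (i,j) * y $ j\<bar>)"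
      unfolding sum_negf[symmetric] using Z i by (intro sum.cong) (auto simp: abs_mult abs_of_nonpos)
    have offle: "(\<Sum>j\<in>{..<n}-{i}. Mx $$ (i,j) * \<bar>y $ j\<bar>) \<le> 0"
      unfolding offabs by (simp add: sum_nonneg)
    from h show ?thesis
    proof
      assume "(Mx *\<^sub>v y) $ i = 0"
      then have "Mx $$ (i,i) * y $ i + (\<Sum>j\<in>{..<n}-{i}. Mx $$ (i,j) * y $ j) = 0"
        using mv[OF y i] ssplit[of "\<lambda>j. y $ j"] by simp
      then have "\<bar>Mx $$ (i,i) * y $ i\<bar> = \<bar>\<Sum>j\<in>{..<n}-{i}. Mx $$ (i,j) * y $ j\<bar>" by (simp add: eq_neg_iff_add_eq_0[symmetric])
      also have "\<dots> \<le> (\<Sum>j\<in>{..<n}-{i}. \<bar>Mx $$ (i,j) * y $ j\<bar>)" by (rule sum_abs)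
      finally have "Mx $$ (i,i) * \<bar>y $ i\<bar> \<le> (\<Sum>j\<in>{..<n}-{i}. \<bar>Mx $$ (i,j) * y $ j\<bar>)"
        using diag[OF i] by (simp add: abs_mult)
      then show ?thesis using eA offabs by linarith
    next
      assume "y $ i = 0"
      then show ?thesis using eA offle by simp
    qed
  qed
  define K where "K = mat n n (\<lambda>(i,j). if i = n - 1 then (if j = n - 1 then 1 else 0) else Mx $$ (i,j))"
  have Kc: "K \<in> carrier_mat n n" by (simp add: K_def)
  have Kv: "(K *\<^sub>v x) $ i = (if i = n - 1 then x $ (n - 1) else (Mx *\<^sub>v x) $ i)"
    if x: "x \<in> carrier_vec n" and i: "i < n" for x i
  proof (cases "i = n - 1")
    case True
    have ite: "(if c then 1 else 0) * (z::real) = (if c then z else 0)" for c z by simp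
    show ?thesis using mv_sum[OF Kc x i] True n by (simp add: K_def ite sum.delta)
  next
    case False
    then show ?thesis using mv_sum[OF Kc x i] mv[OF x i] i by (simp add: K_def)
  qed
  have Kinj: "y = 0\<^sub>v n" if y: "y \<in> carrier_vec n" and Ky: "K *\<^sub>v y = 0\<^sub>v n" for y
  proof (rule ccontr)
    assume yne: "y \<noteq> 0\<^sub>v n"
    have Kyi: "(K *\<^sub>v y) $ i = 0" if "i < n" for i using Ky that by simp
    have yl: "y $ (n - 1) = 0" using Kyi[of "n - 1"] Kv[OF y, of "n - 1"] n by simp
    have h: "(Mx *\<^sub>v y) $ i = 0 \<or> y $ i = 0" if "i < n" for i
      using Kyi[OF that] Kv[OF y that] yl by (auto split: if_splits)
    have ay: "map_vec abs y \<in> carrier_vec n" using y by simp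
    have le: "\<forall>i<n. (Mx *\<^sub>v map_vec abs y) $ i \<le> 0" using lemAbs[OF y _ h] by blast
    have eq: "\<forall>i<n. (Mx *\<^sub>v map_vec abs y) $ i = 0" using lemP[OF ay le] by blast
    have "\<exists>i<n. y $ i \<noteq> 0"
    proof (rule ccontr)
      assume "\<not> (\<exists>i<n. y $ i \<noteq> 0)"
      then have "y = 0\<^sub>v n" using y by (intro eq_vecI) auto
      with yne show False by simp
    qed
    then have nz: "\<exists>i<n. map_vec abs y $ i \<noteq> 0" using y by auto
    have "\<forall>i<n. 0 < map_vec abs y $ i" by (rule lemQ[OF ay _ eq nz]) (use y in auto)
    then have "0 < map_vec abs y $ (n - 1)" using n by simp
    then show False using yl n y by simp
  qed
  have Ksurj: "\<exists>x\<in>carrier_vec n. K *\<^sub>v x = c" if c: "c \<in> carrier_vec n" for c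
  proof -
    have "det K \<noteq> 0" using det_0_iff_vec_prod_zero[OF Kc] Kinj by blast
    from det_non_zero_imp_unit[OF Kc this, of undefined]
    obtain Q where Q: "Q \<in> carrier_mat n n" "K * Q = 1\<^sub>m n" unfolding Units_def ring_mat_def by auto
    have "K *\<^sub>v (Q *\<^sub>v c) = (K * Q) *\<^sub>v c" using assoc_mult_mat_vec[OF Kc Q(1) c] by simp
    also have "\<dots> = c" using Q c by simp
    finally show ?thesis using Q c by (intro bexI[of _ "Q *\<^sub>v c"]) auto
  qed
  have last: "(Mx *\<^sub>v x) $ (n - 1) = c $ (n - 1)" if x: "x \<in> carrier_vec n" and c: "c \<in> carrier_vec n"
    and vc: "(\<Sum>i<n. v $ i * c $ i) = 0" and oth: "\<forall>i<n - 1. (Mx *\<^sub>v x) $ i = c $ i" for x c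
  proof -
    have "(\<Sum>i<n. v $ i * ((Mx *\<^sub>v x) $ i - c $ i)) = 0"
      using key[OF x] vc by (simp add: right_diff_distrib sum_subtractf)
    also have "(\<Sum>i<n. v $ i * ((Mx *\<^sub>v x) $ i - c $ i)) = (\<Sum>i<n. if i = n - 1 then v $ (n - 1) * ((Mx *\<^sub>v x) $ (n - 1) - c $ (n - 1)) else 0)"
      using oth by (intro sum.cong) auto
    also have "\<dots> = v $ (n - 1) * ((Mx *\<^sub>v x) $ (n - 1) - c $ (n - 1))" using n by (simp add: sum.delta)
    finally show ?thesis using vpos[rule_format, of "n - 1"] n by simp
  qed
  obtain u where u: "u \<in> carrier_vec n" "K *\<^sub>v u = unit_vec n (n - 1)"
    using Ksurj[of "unit_vec n (n - 1)"] by auto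
  have ul: "u $ (n - 1) = 1" using arg_cong[OF u(2), of "\<lambda>z. z $ (n - 1)"] Kv[OF u(1), of "n - 1"] n by simp
  have uoth: "\<forall>i<n - 1. (Mx *\<^sub>v u) $ i = 0\<^sub>v n $ i"
  proof (intro allI impI)
    fix i assume i: "i < n - 1"
    show "(Mx *\<^sub>v u) $ i = 0\<^sub>v n $ i" using arg_cong[OF u(2), of "\<lambda>z. z $ i"] Kv[OF u(1), of i] i by simp
  qed
  have Mu: "(Mx *\<^sub>v u) $ i = 0" if i: "i < n" for i
  proof (cases "i = n - 1")
    case True
    have "(Mx *\<^sub>v u) $ (n - 1) = (0\<^sub>v n) $ (n - 1)"
      by (rule last[OF u(1) _ _ ]) (use uoth n in auto)
    then show ?thesis using True n by simp
  next
    case False then show ?thesis using uoth i by simp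
  qed
  define w where "w = map_vec abs u"
  have w: "w \<in> carrier_vec n" using u by (simp add: w_def)
  have Mw: "\<forall>i<n. (Mx *\<^sub>v w) $ i = 0"
    using lemP[OF w] lemAbs[OF u(1)] Mu unfolding w_def by blast
  have wpos: "\<forall>i<n. 0 < w $ i"
    by (rule lemQ[OF w _ Mw]) (use u ul n w_def in \<open>auto intro!: exI[of _ "n - 1"]\<close>)
  define b' where "b' = vec n (\<lambda>i. if i = n - 1 then 0 else b $ i)"
  obtain x0 where x0: "x0 \<in> carrier_vec n" "K *\<^sub>v x0 = b'"
    using Ksurj[of b'] by (auto simp: b'_def)
  have x0oth: "\<forall>i<n - 1. (Mx *\<^sub>v x0) $ i = b $ i"
  proof (intro allI impI)
    fix i assume i: "i < n - 1"
    show "(Mx *\<^sub>v x0) $ i = b $ i" using arg_cong[OF x0(2), of "\<lambda>z. z $ i"] Kv[OF x0(1), of i] i by (simp add: b'_def)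
  qed
  have vbs: "(\<Sum>i<n. v $ i * b $ i) = 0" using vb b by (simp add: scalar_prod_def lessThan_atLeast0)
  have Mx0: "(Mx *\<^sub>v x0) $ i = b $ i" if i: "i < n" for i
  proof (cases "i = n - 1")
    case True then show ?thesis using last[OF x0(1) b vbs x0oth] by simp
  next
    case False then show ?thesis using x0oth i by simp
  qed
  define T where "T = (\<Sum>i<n. \<bar>x0 $ i\<bar> / w $ i)"
  define X where "X t = x0 + t \<cdot>\<^sub>v w" for t
  have Xc: "X t \<in> carrier_vec n" for t using x0 w by (simp add: X_def)
  have Xi: "X t $ i = x0 $ i + t * w $ i" if "i < n" for t i using x0 w that by (simp add: X_def)
  have sol: "X t \<in> {x \<in> carrier_vec n. A *\<^sub>v x - map_vec abs x = b}" if t: "T \<le> t" for t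
  proof -
    have nonneg: "0 \<le> X t $ i" if i: "i < n" for i
    proof -
      have "\<bar>x0 $ i\<bar> / w $ i \<le> T" unfolding T_def
        using i wpos by (intro member_le_sum) auto
      then have "\<bar>x0 $ i\<bar> / w $ i \<le> t" using t by linarith
      then have "\<bar>x0 $ i\<bar> \<le> t * w $ i" using wpos i by (simp add: divide_le_eq)
      then show ?thesis using Xi[OF i, of t] by linarith
    qed
    have MX: "(Mx *\<^sub>v X t) $ i = b $ i" if i: "i < n" for i
    proof -
      have "(Mx *\<^sub>v X t) $ i = (\<Sum>j<n. Mx $$ (i,j) * x0 $ j) + t * (\<Sum>j<n. Mx $$ (i,j) * w $ j)"
        using mv[OF Xc i] Xi by (simp add: algebra_simps sum.distrib sum_distrib_left)
      also have "\<dots> = b $ i" using mv[OF x0(1) i] mv[OF w i] Mx0[OF i] Mw i by simp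
      finally show ?thesis .
    qed
    have "A *\<^sub>v X t - map_vec abs (X t) = b"
    proof (rule eq_vecI)
      show "dim_vec (A *\<^sub>v X t - map_vec abs (X t)) = dim_vec b" using A b Xc[of t] by simp
      fix i assume "i < dim_vec b"
      then have i: "i < n" using b by simp
      have "(Mx *\<^sub>v X t) $ i = (A *\<^sub>v X t) $ i - X t $ i"
        using A Xc[of t] i by (simp add: Mx_def minus_mult_distrib_mat_vec)
      then show "(A *\<^sub>v X t - map_vec abs (X t)) $ i = b $ i"
        using MX[OF i] nonneg[OF i] i A Xc[of t] by simp
    qed
    then show ?thesis using Xc by simp
  qed
  have inj: "inj_on X {T..}"
  proof (rule inj_onI)
    fix s t assume "X s = X t"
    then have "X s $ (n - 1) = X t $ (n - 1)" by simp
    then show "s = t" using Xi[of "n - 1"] n wpos[rule_format, of "n - 1"] by simp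
  qed
  have "infinite (X ` {T..})" using inj infinite_Ici[of T] by (simp add: finite_image_iff)
  moreover have "X ` {T..} \<subseteq> {x \<in> carrier_vec n. A *\<^sub>v x - map_vec abs x = b}" using sol by auto
  ultimately show ?thesis using finite_subset by blast
qed
end
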